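(* For every integer $K\ge1$, $$s(5,K,3)=\begin{cases}\left\lceil\frac{K}{2}\right\rceil & \text{if } K\equiv 0 \text{ or } 9 \pmod{10},\\[2pt] \left\lceil\frac{K}{2}\right\rceil+1 & \text{otherwise.}\end{cases}$$
   Context: A placement delivery array $S$-PDA$(F,K,Z)$ is an $F\times K$ array $R=(r_{j,k})$, $1\le j\le F$, $1\le k\le K$, over a finite set $S$ such that: (1) each cell is either empty or contains an element of $S$; (2) each column contains exactly $Z$ empty cells; (3) each element of $S$ occurs at most once in each row and at most once in each column; (4) if two distinct nonempty cells satisfy $r_{j_1,k_1}=r_{j_2,k_2}=t\in S$, then the cells $r_{j_1,k_2}$ and $r_{j_2,k_1}$ are empty. For integers $F,K\ge1$, $0\le Z\le F$, define $s(F,K,Z)=\min\{|S| : \text{there exists an } S\text{-PDA}(F,K,Z)\}$. *)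

theory Defs
  imports Main
begin

text \<open>An S-PDA(F,K,Z): an F x K array with rows indexed by 0..<F and columns by 0..<K.
  A cell is None (empty) or Some t with t in S.\<close>

definition is_PDA :: "nat set \<Rightarrow> nat \<Rightarrow> nat \<Rightarrow> nat \<Rightarrow> (nat \<Rightarrow> nat \<Rightarrow> nat option) \<Rightarrow> bool" where
  "is_PDA S F K Z R \<longleftrightarrow>
     finite S \<and>
     (\<forall>j<F. \<forall>k<K. \<forall>t. R j k = Some t \<longrightarrow> t \<in> S) \<and>
     (\<forall>k<K. card {j. j < F \<and> R j k = None} = Z) \<and>
     (\<forall>j<F. \<forall>k1<K. \<forall>k2<K. \<forall>t. R j k1 = Some t \<and> R j k2 = Some t \<longrightarrow> k1 = k2) \<and>
     (\<forall>k<K. \<forall>j1<F. \<forall>j2<F. \<forall>t. R j1 k = Some t \<and> R j2 k = Some t \<longrightarrow> j1 = j2) \<and>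
     (\<forall>j1<F. \<forall>j2<F. \<forall>k1<K. \<forall>k2<K. \<forall>t.
        (j1, k1) \<noteq> (j2, k2) \<and> R j1 k1 = Some t \<and> R j2 k2 = Some t \<longrightarrow>
        R j1 k2 = None \<and> R j2 k1 = None)"

text \<open>s(F,K,Z): the minimum size of S over all S-PDA(F,K,Z). Symbols are taken
  to be natural numbers, which is no loss of generality since only |S| matters.\<close>

definition s_PDA :: "nat \<Rightarrow> nat \<Rightarrow> nat \<Rightarrow> nat" where
  "s_PDA F K Z = (LEAST n. \<exists>S R. is_PDA S F K Z R \<and> card S = n)"

end

theory Submission
  imports Defs
begin


lemma PD:
  assumes A: "is_PDA S F K Z R"
  shows PD1: "finite S"
    and PD2: "\<And>j k t. j<F \<Longrightarrow> k<K \<Longrightarrow> R j k = Some t \<Longrightarrow> t \<in> S"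
    and PD3: "\<And>k. k<K \<Longrightarrow> card {j. j < F \<and> R j k = None} = Z"
    and PD4: "\<And>j k1 k2 t. j<F \<Longrightarrow> k1<K \<Longrightarrow> k2<K \<Longrightarrow> R j k1 = Some t \<Longrightarrow> R j k2 = Some t \<Longrightarrow> k1 = k2"
    and PD5: "\<And>k j1 j2 t. k<K \<Longrightarrow> j1<F \<Longrightarrow> j2<F \<Longrightarrow> R j1 k = Some t \<Longrightarrow> R j2 k = Some t \<Longrightarrow> j1 = j2"
    and PD6: "\<And>j1 j2 k1 k2 t. j1<F \<Longrightarrow> j2<F \<Longrightarrow> k1<K \<Longrightarrow> k2<K \<Longrightarrow>
        (j1, k1) \<noteq> (j2, k2) \<Longrightarrow> R j1 k1 = Some t \<Longrightarrow> R j2 k2 = Some t \<Longrightarrow>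
        R j1 k2 = None \<and> R j2 k1 = None"
proof -
  note B = A[unfolded is_PDA_def]
  from B show "finite S" by (rule conjunct1)
  from B have b2: "\<forall>j<F. \<forall>k<K. \<forall>t. R j k = Some t \<longrightarrow> t \<in> S" by (elim conjE)
  then show "\<And>j k t. j<F \<Longrightarrow> k<K \<Longrightarrow> R j k = Some t \<Longrightarrow> t \<in> S" by simp
  from B have b3: "\<forall>k<K. card {j. j < F \<and> R j k = None} = Z" by (elim conjE)
  then show "\<And>k. k<K \<Longrightarrow> card {j. j < F \<and> R j k = None} = Z" by simp
  from B have b4: "\<forall>j<F. \<forall>k1<K. \<forall>k2<K. \<forall>t. R j k1 = Some t \<and> R j k2 = Some t \<longrightarrow> k1 = k2" by (elim conjE)
  then show "\<And>j k1 k2 t. j<F \<Longrightarrow> k1<K \<Longrightarrow> k2<K \<Longrightarrow> R j k1 = Some t \<Longrightarrow> R j k2 = Some t \<Longrightarrow> k1 = k2" by blast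
  from B have b5: "\<forall>k<K. \<forall>j1<F. \<forall>j2<F. \<forall>t. R j1 k = Some t \<and> R j2 k = Some t \<longrightarrow> j1 = j2" by (elim conjE)
  then show "\<And>k j1 j2 t. k<K \<Longrightarrow> j1<F \<Longrightarrow> j2<F \<Longrightarrow> R j1 k = Some t \<Longrightarrow> R j2 k = Some t \<Longrightarrow> j1 = j2" by blast
  from B have b6: "\<forall>j1<F. \<forall>j2<F. \<forall>k1<K. \<forall>k2<K. \<forall>t.
        (j1, k1) \<noteq> (j2, k2) \<and> R j1 k1 = Some t \<and> R j2 k2 = Some t \<longrightarrow>
        R j1 k2 = None \<and> R j2 k1 = None" by (elim conjE)
  then show "\<And>j1 j2 k1 k2 t. j1<F \<Longrightarrow> j2<F \<Longrightarrow> k1<K \<Longrightarrow> k2<K \<Longrightarrow>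
        (j1, k1) \<noteq> (j2, k2) \<Longrightarrow> R j1 k1 = Some t \<Longrightarrow> R j2 k2 = Some t \<Longrightarrow>
        R j1 k2 = None \<and> R j2 k1 = None" by blast
qed

lemma PDI:
  assumes "finite S"
    and "\<And>j k t. j<F \<Longrightarrow> k<K \<Longrightarrow> R j k = Some t \<Longrightarrow> t \<in> S"
    and "\<And>k. k<K \<Longrightarrow> card {j. j < F \<and> R j k = None} = Z"
    and "\<And>j k1 k2 t. j<F \<Longrightarrow> k1<K \<Longrightarrow> k2<K \<Longrightarrow> R j k1 = Some t \<Longrightarrow> R j k2 = Some t \<Longrightarrow> k1 = k2"
    and "\<And>k j1 j2 t. k<K \<Longrightarrow> j1<F \<Longrightarrow> j2<F \<Longrightarrow> R j1 k = Some t \<Longrightarrow> R j2 k = Some t \<Longrightarrow> j1 = j2"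
    and "\<And>j1 j2 k1 k2 t. j1<F \<Longrightarrow> j2<F \<Longrightarrow> k1<K \<Longrightarrow> k2<K \<Longrightarrow>
        (j1, k1) \<noteq> (j2, k2) \<Longrightarrow> R j1 k1 = Some t \<Longrightarrow> R j2 k2 = Some t \<Longrightarrow>
        R j1 k2 = None \<and> R j2 k1 = None"
  shows "is_PDA S F K Z R"
  unfolding is_PDA_def
proof (intro conjI)
  show "finite S" by (rule assms(1))
  show "\<forall>j<F. \<forall>k<K. \<forall>t. R j k = Some t \<longrightarrow> t \<in> S" using assms(2) by blast
  show "\<forall>k<K. card {j. j < F \<and> R j k = None} = Z" using assms(3) by blast
  show "\<forall>j<F. \<forall>k1<K. \<forall>k2<K. \<forall>t. R j k1 = Some t \<and> R j k2 = Some t \<longrightarrow> k1 = k2"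
    using assms(4) by blast
  show "\<forall>k<K. \<forall>j1<F. \<forall>j2<F. \<forall>t. R j1 k = Some t \<and> R j2 k = Some t \<longrightarrow> j1 = j2"
    using assms(5) by blast
  show "\<forall>j1<F. \<forall>j2<F. \<forall>k1<K. \<forall>k2<K. \<forall>t.
        (j1, k1) \<noteq> (j2, k2) \<and> R j1 k1 = Some t \<and> R j2 k2 = Some t \<longrightarrow>
        R j1 k2 = None \<and> R j2 k1 = None"
    using assms(6) by blast
qed


locale pda =
  fixes S :: "nat set" and K :: nat and R :: "nat \<Rightarrow> nat \<Rightarrow> nat option"
  assumes P: "is_PDA S 5 K 3 R"
begin

definition Oc :: "nat \<Rightarrow> (nat \<times> nat) set" where
  "Oc t = {c. fst c < 5 \<and> snd c < K \<and> R (fst c) (snd c) = Some t}"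

definition C :: "(nat \<times> nat) set" where
  "C = {c. fst c < 5 \<and> snd c < K \<and> R (fst c) (snd c) \<noteq> None}"

lemma finS: "finite S" using PD1[OF P] .
lemma valS: "j < 5 \<Longrightarrow> k < K \<Longrightarrow> R j k = Some t \<Longrightarrow> t \<in> S"
  by (rule PD2[OF P])
lemma colnone: "k < K \<Longrightarrow> card {j. j < 5 \<and> R j k = None} = 3"
  by (rule PD3[OF P])
lemma rowu: "j < 5 \<Longrightarrow> k1 < K \<Longrightarrow> k2 < K \<Longrightarrow> R j k1 = Some t \<Longrightarrow> R j k2 = Some t \<Longrightarrow> k1 = k2"
  by (rule PD4[OF P])
lemma colu: "k < K \<Longrightarrow> j1 < 5 \<Longrightarrow> j2 < 5 \<Longrightarrow> R j1 k = Some t \<Longrightarrow> R j2 k = Some t \<Longrightarrow> j1 = j2"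
  by (rule PD5[OF P])
lemma crossR: "j1 < 5 \<Longrightarrow> j2 < 5 \<Longrightarrow> k1 < K \<Longrightarrow> k2 < K \<Longrightarrow> (j1, k1) \<noteq> (j2, k2) \<Longrightarrow>
   R j1 k1 = Some t \<Longrightarrow> R j2 k2 = Some t \<Longrightarrow> R j1 k2 = None \<and> R j2 k1 = None"
  by (rule PD6[OF P])

lemma cross: "c \<in> Oc t \<Longrightarrow> c' \<in> Oc t \<Longrightarrow> c \<noteq> c' \<Longrightarrow> R (fst c) (snd c') = None"
  unfolding Oc_def using crossR[of "fst c" "fst c'" "snd c" "snd c'" t] by (auto simp: prod_eq_iff)

lemma colfilled: assumes "k < K" shows "card {j. j < 5 \<and> R j k \<noteq> None} = 2"
proof -
  have e: "{j. j < 5 \<and> R j k = None} \<union> {j. j < 5 \<and> R j k \<noteq> None} = {..<5::nat}" by auto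
  have "card ({j. j < 5 \<and> R j k = None} \<union> {j. j < 5 \<and> R j k \<noteq> None}) =
     card {j. j < 5 \<and> R j k = None} + card {j. j < 5 \<and> R j k \<noteq> None}"
    by (rule card_Un_disjoint) auto
  then have "5 = 3 + card {j. j < 5 \<and> R j k \<noteq> None}" unfolding e using colnone[OF assms] by simp
  then show ?thesis by simp
qed

lemma colfilled': "k < K \<Longrightarrow> card {j. j < 5 \<and> (\<exists>y. R j k = Some y)} = 2"
  using colfilled by simp

lemma finO: "finite (Oc t)"
  by (rule finite_subset[of _ "{..<5} \<times> {..<K}"]) (auto simp: Oc_def)

lemma finC: "finite C"
  by (rule finite_subset[of _ "{..<5} \<times> {..<K}"]) (auto simp: C_def)

lemma inj_fst: "inj_on fst (Oc t)"
proof (rule inj_onI)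
  fix c c' assume "c \<in> Oc t" "c' \<in> Oc t" "fst c = fst c'"
  then show "c = c'" unfolding Oc_def using rowu[of "fst c" "snd c" "snd c'" t] by (auto simp: prod_eq_iff)
qed

lemma cardO4: "card (Oc t) \<le> 4"
proof (cases "Oc t = {}")
  case True then show ?thesis by simp
next
  case False
  then obtain c0 where c0: "c0 \<in> Oc t" by blast
  have "fst ` (Oc t - {c0}) \<subseteq> {j. j < 5 \<and> R j (snd c0) = None}"
  proof
    fix x assume "x \<in> fst ` (Oc t - {c0})"
    then obtain c where c: "c \<in> Oc t" "c \<noteq> c0" "x = fst c" by blast
    then have "R (fst c) (snd c0) = None" using cross[of c t c0] c0 by blast
    moreover have "fst c < 5" using c unfolding Oc_def by auto
    ultimately show "x \<in> {j. j < 5 \<and> R j (snd c0) = None}" using c by auto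
  qed
  then have "card (fst ` (Oc t - {c0})) \<le> 3"
    using colnone[of "snd c0"] c0 card_mono[of "{j. j < 5 \<and> R j (snd c0) = None}"]
    unfolding Oc_def by fastforce
  moreover have "card (fst ` (Oc t - {c0})) = card (Oc t - {c0})"
    by (rule card_image) (meson Diff_subset inj_fst inj_on_subset)
  moreover have "card (Oc t - {c0}) = card (Oc t) - 1" using c0 finO by simp
  ultimately show ?thesis by linarith
qed

lemma sum_filter: "(\<Sum>t\<in>S. card {c \<in> Oc t. Q c}) = card {c \<in> C. Q c}"
proof -
  have "(\<Sum>t\<in>S. card {c \<in> Oc t. Q c}) = card (\<Union>t\<in>S. {c \<in> Oc t. Q c})"
    apply (rule card_UN_disjoint[symmetric])
    using finS apply simp
    using finO apply simp
    apply (auto simp: Oc_def)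
    done
  moreover have "(\<Union>t\<in>S. {c \<in> Oc t. Q c}) = {c \<in> C. Q c}"
    by (auto simp: Oc_def C_def valS)
  ultimately show ?thesis by simp
qed

lemma cardC: "card C = 2 * K"
proof -
  have "C = (\<Union>k\<in>{..<K}. (\<lambda>j. (j, k)) ` {j. j < 5 \<and> R j k \<noteq> None})"
    by (auto simp: C_def)
  moreover have "card (\<Union>k\<in>{..<K}. (\<lambda>j. (j, k)) ` {j. j < 5 \<and> R j k \<noteq> None})
      = (\<Sum>k\<in>{..<K}. card ((\<lambda>j. (j, k)) ` {j. j < 5 \<and> R j k \<noteq> None}))"
    by (rule card_UN_disjoint) auto
  moreover have "\<And>k. k < K \<Longrightarrow> card ((\<lambda>j. (j, k)) ` {j. j < 5 \<and> R j k \<noteq> None}) = 2"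
    by (subst card_image) (auto simp: inj_on_def colfilled')
  ultimately show ?thesis by simp
qed

lemma sumO: "(\<Sum>t\<in>S. card (Oc t)) = 2 * K"
  using sum_filter[of "\<lambda>c. True"] cardC by simp

definition a :: "nat \<Rightarrow> nat \<Rightarrow> nat" where "a t v = card {c \<in> Oc t. fst c = v}"
definition b :: "nat \<Rightarrow> nat \<Rightarrow> nat" where "b t v = card {c \<in> Oc t. fst c \<noteq> v \<and> R v (snd c) \<noteq> None}"

lemma sum_ab: assumes v: "v < 5" shows "(\<Sum>t\<in>S. a t v) = (\<Sum>t\<in>S. b t v)"
proof -
  have 1: "(\<Sum>t\<in>S. a t v) = card {c \<in> C. fst c = v}" unfolding a_def by (rule sum_filter)
  have 2: "(\<Sum>t\<in>S. b t v) = card {c \<in> C. fst c \<noteq> v \<and> R v (snd c) \<noteq> None}" unfolding b_def by (rule sum_filter)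
  have 3: "card {c \<in> C. fst c = v} = card {k. k < K \<and> R v k \<noteq> None}"
  proof -
    have "{c \<in> C. fst c = v} = (\<lambda>k. (v, k)) ` {k. k < K \<and> R v k \<noteq> None}"
      using v by (auto simp: C_def)
    then show ?thesis by (simp add: card_image inj_on_def)
  qed
  have 4: "card {c \<in> C. fst c \<noteq> v \<and> R v (snd c) \<noteq> None} = card {k. k < K \<and> R v k \<noteq> None}"
  proof -
    have inj: "inj_on snd {c \<in> C. fst c \<noteq> v \<and> R v (snd c) \<noteq> None}"
    proof (rule inj_onI)
      fix c c' assume c: "c \<in> {c \<in> C. fst c \<noteq> v \<and> R v (snd c) \<noteq> None}"
        and c': "c' \<in> {c \<in> C. fst c \<noteq> v \<and> R v (snd c) \<noteq> None}" and eq: "snd c = snd c'"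
      show "c = c'"
      proof (rule ccontr)
        assume ne: "c \<noteq> c'"
        then have "fst c \<noteq> fst c'" using eq by (auto simp: prod_eq_iff)
        let ?k = "snd c"
        have k: "?k < K" using c by (auto simp: C_def)
        have "{v, fst c, fst c'} \<subseteq> {j. j < 5 \<and> R j ?k \<noteq> None}"
          using c c' eq v by (auto simp: C_def)
        then have "card {v, fst c, fst c'} \<le> 2"
          using colfilled[OF k] card_mono[of "{j. j < 5 \<and> R j ?k \<noteq> None}"] by fastforce
        moreover have "card {v, fst c, fst c'} = 3" using c c' \<open>fst c \<noteq> fst c'\<close> by auto
        ultimately show False by simp
      qed
    qed
    have img: "snd ` {c \<in> C. fst c \<noteq> v \<and> R v (snd c) \<noteq> None} = {k. k < K \<and> R v k \<noteq> None}"
    proof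
      show "snd ` {c \<in> C. fst c \<noteq> v \<and> R v (snd c) \<noteq> None} \<subseteq> {k. k < K \<and> R v k \<noteq> None}"
        by (auto simp: C_def)
    next
      show "{k. k < K \<and> R v k \<noteq> None} \<subseteq> snd ` {c \<in> C. fst c \<noteq> v \<and> R v (snd c) \<noteq> None}"
      proof
        fix k assume k: "k \<in> {k. k < K \<and> R v k \<noteq> None}"
        have "\<not> {j. j < 5 \<and> R j k \<noteq> None} \<subseteq> {v}"
        proof
          assume "{j. j < 5 \<and> R j k \<noteq> None} \<subseteq> {v}"
          then have "card {j. j < 5 \<and> R j k \<noteq> None} \<le> 1"
            using card_mono[of "{v}"] by fastforce
          then show False using colfilled[of k] k by simp
        qed
        then obtain j where j: "j < 5" "R j k \<noteq> None" "j \<noteq> v" by blast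
        then have "(j, k) \<in> {c \<in> C. fst c \<noteq> v \<and> R v (snd c) \<noteq> None}" using k by (auto simp: C_def)
        then show "k \<in> snd ` {c \<in> C. fst c \<noteq> v \<and> R v (snd c) \<noteq> None}" by force
      qed
    qed
    show ?thesis using card_image[OF inj] img by simp
  qed
  show ?thesis using 1 2 3 4 by simp
qed

lemma a_le1: "a t v \<le> 1"
proof -
  have fin: "finite {c \<in> Oc t. fst c = v}" using finO by simp
  have "\<forall>a1\<in>{c \<in> Oc t. fst c = v}. \<forall>a2\<in>{c \<in> Oc t. fst c = v}. a1 = a2"
    using inj_fst[of t] by (auto simp: inj_on_def)
  then show ?thesis unfolding a_def using card_le_Suc0_iff_eq[OF fin] by simp
qed

lemma a_pos_b0: assumes "c0 \<in> Oc t" "fst c0 = v" shows "b t v = 0"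
proof -
  have E: "{c \<in> Oc t. fst c \<noteq> v \<and> R v (snd c) \<noteq> None} = {}"
  proof (rule ccontr)
    assume "{c \<in> Oc t. fst c \<noteq> v \<and> R v (snd c) \<noteq> None} \<noteq> {}"
    then obtain c where c: "c \<in> Oc t" "fst c \<noteq> v" "R v (snd c) \<noteq> None" by blast
    then have "c0 \<noteq> c" using assms by auto
    then show False using cross[of c0 t c] assms c by auto
  qed
  show ?thesis unfolding b_def E by simp
qed

definition g :: "nat \<Rightarrow> nat \<Rightarrow> int" where "g t v = int (a t v) - int (b t v)"

lemma sum_g: assumes "v < 5" shows "(\<Sum>t\<in>S. g t v) = 0"
proof -
  have e: "(\<Sum>t\<in>S. int (a t v)) = (\<Sum>t\<in>S. int (b t v))"
    unfolding of_nat_sum[symmetric] using sum_ab[OF assms] by (rule arg_cong)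
  show ?thesis unfolding g_def sum_subtractf e by simp
qed

lemma g_row: assumes "v \<in> fst ` Oc t" shows "g t v = 1"
proof -
  obtain c0 where c0: "c0 \<in> Oc t" "fst c0 = v" using assms by blast
  have "{c \<in> Oc t. fst c = v} \<noteq> {}" using c0 by blast
  moreover have "finite {c \<in> Oc t. fst c = v}" using finO by simp
  ultimately have "a t v \<ge> 1" unfolding a_def by (simp add: Suc_le_eq card_gt_0_iff)
  then have "a t v = 1" using a_le1[of t v] by simp
  then show ?thesis using a_pos_b0[OF c0] unfolding g_def by simp
qed

lemma g_four: assumes c4: "card (Oc t) = 4" and v: "v < 5" shows "g t v mod 5 = 1"
proof (cases "v \<in> fst ` Oc t")
  case True then show ?thesis using g_row by simp
next
  case False
  then have E: "{c \<in> Oc t. fst c = v} = {}" by force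
  have a0: "a t v = 0" unfolding a_def E by simp
  have "{c \<in> Oc t. fst c \<noteq> v \<and> R v (snd c) \<noteq> None} = Oc t"
  proof (rule set_eqI, rule iffI)
    fix c assume "c \<in> {c \<in> Oc t. fst c \<noteq> v \<and> R v (snd c) \<noteq> None}" then show "c \<in> Oc t" by simp
  next
    fix c assume c: "c \<in> Oc t"
    have "fst c \<noteq> v" using c False by force
    moreover have "R v (snd c) \<noteq> None"
    proof
      assume none: "R v (snd c) = None"
      have k: "snd c < K" using c unfolding Oc_def by auto
      have "insert v (fst ` (Oc t - {c})) \<subseteq> {j. j < 5 \<and> R j (snd c) = None}"
      proof
        fix x assume "x \<in> insert v (fst ` (Oc t - {c}))"
        then show "x \<in> {j. j < 5 \<and> R j (snd c) = None}"
        proof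
          assume "x = v" then show ?thesis using v none by simp
        next
          assume "x \<in> fst ` (Oc t - {c})"
          then obtain c' where c': "c' \<in> Oc t" "c' \<noteq> c" "x = fst c'" by blast
          then show ?thesis using cross[of c' t c] c unfolding Oc_def by auto
        qed
      qed
      then have "card (insert v (fst ` (Oc t - {c}))) \<le> 3"
        using colnone[OF k] card_mono[of "{j. j < 5 \<and> R j (snd c) = None}"] by fastforce
      moreover have "card (fst ` (Oc t - {c})) = card (Oc t - {c})"
        by (rule card_image) (meson Diff_subset inj_fst inj_on_subset)
      moreover have "card (Oc t - {c}) = 3" using c c4 finO by simp
      moreover have "v \<notin> fst ` (Oc t - {c})" using False by blast
      moreover have "finite (fst ` (Oc t - {c}))" using finO by simp
      ultimately show False by simp
    qed
    ultimately show "c \<in> {c \<in> Oc t. fst c \<noteq> v \<and> R v (snd c) \<noteq> None}" using c by simp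
  qed
  then have "b t v = 4" unfolding b_def using c4 by simp
  then have "g t v = -4" unfolding g_def using a0 by simp
  then show ?thesis by simp
qed

lemma exists_free: assumes "card (Oc t) \<le> 2" shows "\<exists>x<5. g t x = 0"
proof -
  let ?Bd = "\<Union>c\<in>Oc t. {i. i < 5 \<and> R i (snd c) \<noteq> None}"
  have "card ?Bd \<le> (\<Sum>c\<in>Oc t. card {i. i < 5 \<and> R i (snd c) \<noteq> None})"
    by (rule card_UN_le) (rule finO)
  also have "\<dots> = (\<Sum>c\<in>Oc t. 2)"
    by (rule sum.cong) (auto simp: Oc_def colfilled')
  also have "\<dots> \<le> 4" using assms by simp
  finally have "card ?Bd \<le> 4" .
  moreover have "finite ?Bd" using finO by auto
  ultimately have "\<not> {..<5::nat} \<subseteq> ?Bd"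
    using card_mono[of ?Bd "{..<5}"] by fastforce
  then obtain x where x: "x < 5" "x \<notin> ?Bd" by blast
  have E1: "{c \<in> Oc t. fst c = x} = {}"
    using x by (auto simp: Oc_def)
  have E2: "{c \<in> Oc t. fst c \<noteq> x \<and> R x (snd c) \<noteq> None} = {}"
    using x by auto
  have "g t x = 0" unfolding g_def a_def b_def E1 E2 by simp
  then show ?thesis using x by blast
qed

lemma sum_mod4:
  assumes "A \<subseteq> S" "\<forall>t\<in>A. card (Oc t) = 4" "v < 5"
  shows "(\<Sum>t\<in>A. g t v) mod 5 = int (card A) mod 5"
proof -
  have "finite A" using assms(1) finS finite_subset by blast
  then show ?thesis using assms
  proof (induction A rule: finite_induct)
    case empty then show ?case by simp
  next
    case (insert x F)
    have gx: "g x v mod 5 = 1" using insert.prems g_four by auto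
    have IH: "(\<Sum>t\<in>F. g t v) mod 5 = int (card F) mod 5" using insert by auto
    have "(\<Sum>t\<in>insert x F. g t v) mod 5 = (g x v + (\<Sum>t\<in>F. g t v)) mod 5"
      using insert.hyps by simp
    also have "\<dots> = (g x v mod 5 + (\<Sum>t\<in>F. g t v) mod 5) mod 5" by (simp add: mod_add_eq)
    also have "\<dots> = (1 + int (card F) mod 5) mod 5" using gx IH by simp
    also have "\<dots> = int (card (insert x F)) mod 5" using insert.hyps by simp presburger
    finally show ?case .
  qed
qed

lemma lower_refined:
  assumes le: "4 * card S \<le> 2 * K + 2"
  shows "K mod 10 = 0 \<or> K mod 10 = 9"
proof -
  define d where "d t = 4 - card (Oc t)" for t
  have sumd: "(\<Sum>t\<in>S. d t) = 4 * card S - 2 * K"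
    unfolding d_def using sum_subtractf_nat[of S "\<lambda>t. card (Oc t)" "\<lambda>t. 4"] cardO4 sumO by simp
  have sum4: "(\<Sum>t\<in>S. card (Oc t)) \<le> 4 * card S"
    using sum_bounded_above[of S "\<lambda>t. card (Oc t)" 4] cardO4 by simp
  have eq: "(\<Sum>t\<in>S. d t) + 2 * K = 4 * card S" using sumd sum4 sumO by simp
  show ?thesis
  proof (cases "\<forall>t\<in>S. card (Oc t) = 4")
    case True
    have "(\<Sum>t\<in>S. g t 0) mod 5 = int (card S) mod 5" using sum_mod4[of S 0] True by simp
    then have "int (card S) mod 5 = 0" using sum_g[of 0] by simp
    then have n5: "card S mod 5 = 0" by presburger
    have "(\<Sum>t\<in>S. card (Oc t)) = (\<Sum>t\<in>S. 4)" using True by simp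
    then have "2 * K = 4 * card S" using sumO by simp
    then show ?thesis using n5 by presburger
  next
    case False
    then obtain t1 where t1: "t1 \<in> S" "card (Oc t1) \<noteq> 4" by blast
    then have c1: "card (Oc t1) < 4" using cardO4[of t1] by simp
    have split1: "(\<Sum>t\<in>S. d t) = d t1 + (\<Sum>t\<in>S - {t1}. d t)"
      using sum.remove[OF finS t1(1)] by simp
    have gsplit: "g t1 v + (\<Sum>t\<in>S - {t1}. g t v) = 0" if "v < 5" for v
      using sum.remove[OF finS t1(1), of "\<lambda>t. g t v"] sum_g[OF that] by simp
    have cardS1: "card (S - {t1}) = card S - 1" using t1 finS by simp
    have nS: "card S \<ge> 1" using t1 finS card_0_eq by fastforce
    show ?thesis
    proof (cases "card (Oc t1) \<le> 2")
      case True
      have "d t1 \<ge> 2" using True unfolding d_def by simp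
      then have r0: "(\<Sum>t\<in>S - {t1}. d t) = 0" and dt1: "d t1 = 2"
        using split1 eq le by linarith+
      have rest4: "\<forall>t\<in>S - {t1}. card (Oc t) = 4"
      proof
        fix t assume "t \<in> S - {t1}"
        then have "d t = 0" using r0 finS by simp
        then show "card (Oc t) = 4" using cardO4[of t] unfolding d_def by simp
      qed
      have "card (Oc t1) = 2" using dt1 c1 unfolding d_def by simp
      then have "Oc t1 \<noteq> {}" by auto
      then obtain c0 where c0: "c0 \<in> Oc t1" by blast
      have v0: "fst c0 < 5" using c0 unfolding Oc_def by simp
      have g1: "g t1 (fst c0) = 1" using g_row c0 by blast
      obtain x where x: "x < 5" "g t1 x = 0" using exists_free True by blast
      have m1: "(\<Sum>t\<in>S - {t1}. g t (fst c0)) mod 5 = int (card (S - {t1})) mod 5"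
        using sum_mod4[of "S - {t1}" "fst c0"] rest4 v0 by auto
      have m2: "(\<Sum>t\<in>S - {t1}. g t x) mod 5 = int (card (S - {t1})) mod 5"
        using sum_mod4[of "S - {t1}" x] rest4 x by auto
      have e1: "1 + (\<Sum>t\<in>S - {t1}. g t (fst c0)) = 0" using gsplit[OF v0] g1 by simp
      have e2: "(\<Sum>t\<in>S - {t1}. g t x) = 0" using gsplit[OF x(1)] x by simp
      from e1 e2 m1 m2 show ?thesis by presburger
    next
    case False
      then have c3: "card (Oc t1) = 3" using c1 by simp
      then have dt1: "d t1 = 1" unfolding d_def by simp
      have "(\<Sum>t\<in>S. d t) = 2 * (2 * card S - K)" using eq by linarith
      then have "even ((\<Sum>t\<in>S. d t))" by simp
      then have r1: "(\<Sum>t\<in>S - {t1}. d t) = 1" using split1 dt1 eq le by presburger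
      then obtain t2 where t2: "t2 \<in> S - {t1}" "d t2 \<noteq> 0"
        by (metis sum.neutral zero_neq_one)
      have split2: "(\<Sum>t\<in>S - {t1}. d t) = d t2 + (\<Sum>t\<in>S - {t1} - {t2}. d t)"
        using sum.remove[of "S - {t1}" t2] finS t2(1) by simp
      then have r2: "(\<Sum>t\<in>S - {t1} - {t2}. d t) = 0" and dt2: "d t2 = 1" using r1 t2(2) by linarith+
      have c3': "card (Oc t2) = 3" using dt2 cardO4[of t2] unfolding d_def by simp
      have rest4: "\<forall>t\<in>S - {t1} - {t2}. card (Oc t) = 4"
      proof
        fix t assume "t \<in> S - {t1} - {t2}"
        then have "d t = 0" using r2 finS by simp
        then show "card (Oc t) = 4" using cardO4[of t] unfolding d_def by simp
      qed
      have ca: "card (fst ` Oc t1) = 3" using c3 card_image[OF inj_fst[of t1]] by simp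
      have cb: "card (fst ` Oc t2) = 3" using c3' card_image[OF inj_fst[of t2]] by simp
      have sub: "fst ` Oc t1 \<union> fst ` Oc t2 \<subseteq> {..<5}" by (auto simp: Oc_def)
      have "fst ` Oc t1 \<inter> fst ` Oc t2 \<noteq> {}"
      proof
        assume dis: "fst ` Oc t1 \<inter> fst ` Oc t2 = {}"
        have "card (fst ` Oc t1 \<union> fst ` Oc t2) = 6"
          using card_Un_disjoint[OF _ _ dis] finO ca cb by simp
        moreover have "card (fst ` Oc t1 \<union> fst ` Oc t2) \<le> 5"
          using card_mono[OF _ sub] by simp
        ultimately show False by simp
      qed
      then obtain v where v: "v \<in> fst ` Oc t1" "v \<in> fst ` Oc t2" by blast
      have v5: "v < 5" using v by (auto simp: Oc_def)
      have g1: "g t1 v = 1" "g t2 v = 1" using g_row v by auto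
      have "(\<Sum>t\<in>S - {t1}. g t v) = g t2 v + (\<Sum>t\<in>S - {t1} - {t2}. g t v)"
        using sum.remove[of "S - {t1}" t2] finS t2(1) by simp
      then have e: "2 + (\<Sum>t\<in>S - {t1} - {t2}. g t v) = 0" using gsplit[OF v5] g1 by simp
      have m: "(\<Sum>t\<in>S - {t1} - {t2}. g t v) mod 5 = int (card (S - {t1} - {t2})) mod 5"
        using sum_mod4[of "S - {t1} - {t2}" v] rest4 v5 by auto
      have cS2: "card (S - {t1} - {t2}) + 2 = card S" using t1 t2 finS
        by (metis cardS1 One_nat_def add_2_eq_Suc' card.remove card_Diff_singleton finite_Diff nS plus_1_eq_Suc Suc_pred' le_less_trans less_one not_le)
      have "int (card S) mod 5 = 0" using e m cS2 by presburger
      then have n5: "card S mod 5 = 0" by presburger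
      have "2 * K + 2 = 4 * card S" using eq split1 r1 dt1 by simp
      then show ?thesis using n5 by presburger
    qed
  qed
qed

end

lemma lower_bound:
  assumes "is_PDA S 5 K 3 R"
  shows "(if K mod 10 = 0 \<or> K mod 10 = 9 then (K + 1) div 2 else (K + 1) div 2 + 1) \<le> card S"
proof -
  interpret pda S K R using assms by unfold_locales
  have sum4: "(\<Sum>t\<in>S. card (Oc t)) \<le> 4 * card S"
    using sum_bounded_above[of S "\<lambda>t. card (Oc t)" 4] cardO4 by simp
  then have a: "2 * K \<le> 4 * card S" using sumO by simp
  have b: "4 * card S \<le> 2 * K + 2 \<Longrightarrow> K mod 10 = 0 \<or> K mod 10 = 9" by (rule lower_refined)
  show ?thesis
  proof (cases "K mod 10 = 0 \<or> K mod 10 = 9")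
    case True
    have "K + 1 \<le> 2 * card S + 1" using a by linarith
    then have "(K + 1) div 2 \<le> (2 * card S + 1) div 2" by (rule div_le_mono)
    then have "(K + 1) div 2 \<le> card S" by simp
    then show ?thesis by (subst if_P[OF True])
  next
    case False
    then have "\<not> 4 * card S \<le> 2 * K + 2" using b by blast
    then have "K + 3 \<le> 2 * card S + 1" by linarith
    then have "(K + 3) div 2 \<le> (2 * card S + 1) div 2" by (rule div_le_mono)
    moreover have "(K + 3) div 2 = (K + 1) div 2 + 1" by simp
    ultimately have "(K + 1) div 2 + 1 \<le> card S" by linarith
    then show ?thesis by (subst if_not_P[OF False])
  qed
qed


lemma trunc: assumes A: "is_PDA S F K Z R" and le: "K' \<le> K" shows "is_PDA S F K' Z R"
proof -
  have lt: "\<And>k. k < K' \<Longrightarrow> k < K" using le by simp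
  show ?thesis
  proof (rule PDI)
    show "finite S" by (rule PD1[OF A])
    show "\<And>j k t. j<F \<Longrightarrow> k<K' \<Longrightarrow> R j k = Some t \<Longrightarrow> t \<in> S" using PD2[OF A] lt by blast
    show "\<And>k. k<K' \<Longrightarrow> card {j. j < F \<and> R j k = None} = Z" using PD3[OF A] lt by blast
    show "\<And>j k1 k2 t. j<F \<Longrightarrow> k1<K' \<Longrightarrow> k2<K' \<Longrightarrow> R j k1 = Some t \<Longrightarrow> R j k2 = Some t \<Longrightarrow> k1 = k2"
      using PD4[OF A] lt by blast
    show "\<And>k j1 j2 t. k<K' \<Longrightarrow> j1<F \<Longrightarrow> j2<F \<Longrightarrow> R j1 k = Some t \<Longrightarrow> R j2 k = Some t \<Longrightarrow> j1 = j2"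
      using PD5[OF A] lt by blast
    show "\<And>j1 j2 k1 k2 t. j1<F \<Longrightarrow> j2<F \<Longrightarrow> k1<K' \<Longrightarrow> k2<K' \<Longrightarrow>
        (j1, k1) \<noteq> (j2, k2) \<Longrightarrow> R j1 k1 = Some t \<Longrightarrow> R j2 k2 = Some t \<Longrightarrow>
        R j1 k2 = None \<and> R j2 k1 = None" using PD6[OF A] lt by blast
  qed
qed
definition comb :: "nat \<Rightarrow> nat \<Rightarrow> (nat \<Rightarrow> nat \<Rightarrow> nat option) \<Rightarrow> (nat \<Rightarrow> nat \<Rightarrow> nat option) \<Rightarrow> nat \<Rightarrow> nat \<Rightarrow> nat option" where
  "comb n1 K1 R1 R2 j k = (if k < K1 then R1 j k else map_option (\<lambda>t. t + n1) (R2 j (k - K1)))"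

lemma comb_lt: "k < K1 \<Longrightarrow> comb n1 K1 R1 R2 j k = R1 j k" by (simp add: comb_def)
lemma comb_ge: "\<not> k < K1 \<Longrightarrow> comb n1 K1 R1 R2 j k = map_option (\<lambda>t. t + n1) (R2 j (k - K1))"
  by (simp add: comb_def)

lemma combine:
  assumes A: "is_PDA {..<n1} F K1 Z R1" and B: "is_PDA {..<n2} F K2 Z R2"
  shows "is_PDA {..<n1+n2} F (K1+K2) Z (comb n1 K1 R1 R2)"
proof (rule PDI)
  let ?R = "comb n1 K1 R1 R2"
  have A2: "\<And>j k t. j<F \<Longrightarrow> k<K1 \<Longrightarrow> R1 j k = Some t \<Longrightarrow> t < n1" using PD2[OF A] by blast
  have B2: "\<And>j k t. j<F \<Longrightarrow> k<K2 \<Longrightarrow> R2 j k = Some t \<Longrightarrow> t < n2" using PD2[OF B] by blast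
  have sh: "\<And>j k t. \<not> k < K1 \<Longrightarrow> ?R j k = Some t \<Longrightarrow> R2 j (k - K1) = Some (t - n1) \<and> n1 \<le> t"
    by (auto simp: comb_ge)
  show "finite {..<n1+n2}" by simp
  show "\<And>j k t. j<F \<Longrightarrow> k<K1+K2 \<Longrightarrow> ?R j k = Some t \<Longrightarrow> t \<in> {..<n1+n2}"
  proof -
    fix j k t assume j: "j<F" and k: "k<K1+K2" and e: "?R j k = Some t"
    show "t \<in> {..<n1+n2}"
    proof (cases "k < K1")
      case True then show ?thesis using A2[OF j True] e by (simp add: comb_lt)
    next
      case False
      then have "R2 j (k - K1) = Some (t - n1)" "n1 \<le> t" using sh e by blast+
      moreover have "k - K1 < K2" using k False by simp
      ultimately show ?thesis using B2[OF j] by fastforce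
    qed
  qed
  show "\<And>k. k<K1+K2 \<Longrightarrow> card {j. j < F \<and> ?R j k = None} = Z"
  proof -
    fix k assume k: "k<K1+K2"
    show "card {j. j < F \<and> ?R j k = None} = Z"
    proof (cases "k < K1")
      case True then show ?thesis using PD3[OF A True] by (simp add: comb_lt)
    next
      case False
      then have "{j. j < F \<and> ?R j k = None} = {j. j < F \<and> R2 j (k - K1) = None}" by (simp add: comb_ge)
      moreover have "k - K1 < K2" using k False by simp
      ultimately show ?thesis using PD3[OF B] by simp
    qed
  qed
  show "\<And>j k1 k2 t. j<F \<Longrightarrow> k1<K1+K2 \<Longrightarrow> k2<K1+K2 \<Longrightarrow> ?R j k1 = Some t \<Longrightarrow> ?R j k2 = Some t \<Longrightarrow> k1 = k2"
  proof -
    fix j k1 k2 t assume j: "j<F" and k: "k1<K1+K2" "k2<K1+K2" and e: "?R j k1 = Some t" "?R j k2 = Some t"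
    show "k1 = k2"
    proof (cases "k1 < K1")
      case c1: True
      show ?thesis
      proof (cases "k2 < K1")
        case True then show ?thesis using PD4[OF A j c1 True] e c1 by (simp add: comb_lt)
      next
        case False
        then show ?thesis using sh[OF False e(2)] A2[OF j c1] e(1) c1 by (simp add: comb_lt)
      qed
    next
      case c1: False
      show ?thesis
      proof (cases "k2 < K1")
        case True then show ?thesis using sh[OF c1 e(1)] A2[OF j True] e(2) by (simp add: comb_lt)
      next
        case False
        have "k1 - K1 = k2 - K1"
          using PD4[OF B j, of "k1 - K1" "k2 - K1" "t - n1"] sh[OF c1 e(1)] sh[OF False e(2)] k c1 False by simp
        then show ?thesis using c1 False by simp
      qed
    qed
  qed
  show "\<And>k j1 j2 t. k<K1+K2 \<Longrightarrow> j1<F \<Longrightarrow> j2<F \<Longrightarrow> ?R j1 k = Some t \<Longrightarrow> ?R j2 k = Some t \<Longrightarrow> j1 = j2"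
  proof -
    fix k j1 j2 t assume k: "k<K1+K2" and j: "j1<F" "j2<F" and e: "?R j1 k = Some t" "?R j2 k = Some t"
    show "j1 = j2"
    proof (cases "k < K1")
      case True then show ?thesis using PD5[OF A True j] e by (simp add: comb_lt)
    next
      case False
      show ?thesis using PD5[OF B _ j, of "k - K1" "t - n1"] sh[OF False e(1)] sh[OF False e(2)] k False by simp
    qed
  qed
  show "\<And>j1 j2 k1 k2 t. j1<F \<Longrightarrow> j2<F \<Longrightarrow> k1<K1+K2 \<Longrightarrow> k2<K1+K2 \<Longrightarrow>
        (j1, k1) \<noteq> (j2, k2) \<Longrightarrow> ?R j1 k1 = Some t \<Longrightarrow> ?R j2 k2 = Some t \<Longrightarrow>
        ?R j1 k2 = None \<and> ?R j2 k1 = None"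
  proof -
    fix j1 j2 k1 k2 t assume j: "j1<F" "j2<F" and k: "k1<K1+K2" "k2<K1+K2"
      and ne: "(j1, k1) \<noteq> (j2, k2)" and e: "?R j1 k1 = Some t" "?R j2 k2 = Some t"
    show "?R j1 k2 = None \<and> ?R j2 k1 = None"
    proof (cases "k1 < K1")
      case c1: True
      show ?thesis
      proof (cases "k2 < K1")
        case True then show ?thesis using PD6[OF A j c1 True ne] e c1 by (simp add: comb_lt)
      next
        case False
        then have False using sh[OF False e(2)] A2[OF j(1) c1] e(1) c1 by (simp add: comb_lt)
        then show ?thesis ..
      qed
    next
      case c1: False
      show ?thesis
      proof (cases "k2 < K1")
        case True
        then have False using sh[OF c1 e(1)] A2[OF j(2) True] e(2) by (simp add: comb_lt)
        then show ?thesis ..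
      next
        case False
        have ne': "(j1, k1 - K1) \<noteq> (j2, k2 - K1)" using ne c1 False by auto
        have "R2 j1 (k2 - K1) = None \<and> R2 j2 (k1 - K1) = None"
          using PD6[OF B j _ _ ne', of "t - n1"] sh[OF c1 e(1)] sh[OF False e(2)] k c1 False by simp
        then show ?thesis using c1 False by (simp add: comb_ge)
      qed
    qed
  qed
qed

definition mk :: "nat option list list \<Rightarrow> nat \<Rightarrow> nat \<Rightarrow> nat option" where
  "mk L j k = (if k < length L \<and> j < length (L!k) then L!k!j else None)"

lemma all_less_Suc': "(\<forall>k<Suc n. P k) = (P n \<and> (\<forall>k<n. P k))"
  using less_Suc_eq by auto

lemma card_filt: "card {j. j < n \<and> P j} = length (filter P [0..<n])"
proof -
  have "{j. j < n \<and> P j} = set (filter P [0..<n])" by auto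
  then show ?thesis by (metis distinct_card distinct_filter distinct_upt)
qed

definition L2 :: "nat option list list" where
  "L2 = [[Some 0, Some 1, None, None, None], [None, None, Some 0, Some 1, None]]"
definition L4 :: "nat option list list" where
  "L4 = [[None, None, None, Some 0, Some 2], [Some 1, None, Some 0, None, None],
         [None, None, Some 2, Some 1, None], [Some 2, Some 0, None, None, None]]"
definition L6 :: "nat option list list" where
  "L6 = [[Some 0, Some 1, None, None, None],[Some 2, None, Some 1, None, None],
 [Some 3, None, None, Some 1, None],[None, Some 2, Some 0, None, None],[None, Some 3, None, Some 0, None],
 [None,None,Some 3, Some 2, None]]"
definition L10 :: "nat option list list" where
  "L10 = [[Some 1, Some 0, None, None, None], [Some 2, None, Some 0, None, None],
          [Some 3, None, None, Some 0, None], [Some 4, None, None, None, Some 0],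
          [None, Some 2, Some 1, None, None], [None, Some 3, None, Some 1, None],
          [None, Some 4, None, None, Some 1], [None, None, Some 3, Some 2, None],
          [None, None, Some 4, None, Some 2], [None, None, None, Some 4, Some 3]]"

lemma P2: "is_PDA {..<2} 5 2 3 (mk L2)"
  unfolding is_PDA_def by (simp add: card_filt numeral_eq_Suc all_less_Suc' mk_def L2_def)
lemma P4: "is_PDA {..<3} 5 4 3 (mk L4)"
  unfolding is_PDA_def by (simp add: card_filt numeral_eq_Suc all_less_Suc' mk_def L4_def)
lemma P6: "is_PDA {..<4} 5 6 3 (mk L6)"
  unfolding is_PDA_def by (simp add: card_filt numeral_eq_Suc all_less_Suc' mk_def L6_def)
lemma P10: "is_PDA {..<5} 5 10 3 (mk L10)"
  unfolding is_PDA_def by (simp add: card_filt numeral_eq_Suc all_less_Suc' mk_def L10_def)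

lemma P0: "is_PDA {..<0} 5 0 3 R"
  by (rule PDI) auto

lemma blocks: "\<exists>R. is_PDA {..<5*q} 5 (10*q) 3 R"
proof (induction q)
  case 0 then show ?case using P0 by auto
next
  case (Suc q)
  then obtain R where "is_PDA {..<5*q} 5 (10*q) 3 R" by blast
  from combine[OF this P10] have "is_PDA {..<5*q + 5} 5 (10*q + 10) 3 (comb (5*q) (10*q) R (mk L10))" .
  then show ?case by (metis add.commute mult_Suc_right)
qed

lemma base: assumes "1 \<le> r" "r \<le> 10"
  shows "\<exists>R. is_PDA {..<(if r \<le> 2 then 2 else if r \<le> 4 then 3 else if r \<le> 6 then 4 else 5)} 5 r 3 R"
proof -
  consider "r \<le> 2" | "\<not> r \<le> 2" "r \<le> 4" | "\<not> r \<le> 4" "r \<le> 6" | "\<not> r \<le> 6" by linarith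
  then show ?thesis
  proof cases
    case 1 then show ?thesis using trunc[OF P2, of r] by auto
  next
    case 2 then show ?thesis using trunc[OF P4, of r] by auto
  next
    case 3 then show ?thesis using trunc[OF P6, of r] by auto
  next
    case 4 then show ?thesis using trunc[OF P10, of r] assms by auto
  qed
qed

lemma upper: assumes "K \<ge> 1"
  shows "\<exists>R. is_PDA {..<(if K mod 10 = 0 \<or> K mod 10 = 9 then (K + 1) div 2 else (K + 1) div 2 + 1)} 5 K 3 R"
proof -
  define q where "q = (K - 1) div 10"
  define r where "r = (K - 1) mod 10 + 1"
  have K: "K = 10 * q + r" using assms unfolding q_def r_def by simp
  have r: "1 \<le> r" "r \<le> 10" unfolding r_def by simp_all
  define b where "b = (if r \<le> 2 then 2 else if r \<le> 4 then 3 else if r \<le> 6 then 4 else (5::nat))"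
  obtain R1 where R1: "is_PDA {..<5*q} 5 (10*q) 3 R1" using blocks by blast
  obtain R2 where R2: "is_PDA {..<b} 5 r 3 R2" using base[OF r] unfolding b_def by blast
  have C: "is_PDA {..<5*q + b} 5 K 3 (comb (5*q) (10*q) R1 R2)" using combine[OF R1 R2] K by simp
  have m: "K mod 10 = r mod 10" unfolding K by simp
  have "K + 1 = (r + 1) + 2 * (5 * q)" using K by simp
  then have d: "(K + 1) div 2 = (r + 1) div 2 + 5 * q" by simp
  have "r = 1 \<or> r = 2 \<or> r = 3 \<or> r = 4 \<or> r = 5 \<or> r = 6 \<or> r = 7 \<or> r = 8 \<or> r = 9 \<or> r = 10"
    using r by presburger
  then have eq: "(if K mod 10 = 0 \<or> K mod 10 = 9 then (K + 1) div 2 else (K + 1) div 2 + 1) = 5*q + b"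
    unfolding m d b_def by (elim disjE) simp_all
  show ?thesis unfolding eq by (intro exI) (rule C)
qed

theorem mainTheorem15:
  fixes K :: nat
  assumes "K \<ge> 1"
  shows "s_PDA 5 K 3 =
    (if K mod 10 = 0 \<or> K mod 10 = 9 then (K + 1) div 2 else (K + 1) div 2 + 1)"
  unfolding s_PDA_def
proof (rule Least_equality)
  let ?f = "(if K mod 10 = 0 \<or> K mod 10 = 9 then (K + 1) div 2 else (K + 1) div 2 + 1)"
  obtain R where R: "is_PDA {..<?f} 5 K 3 R" using upper[OF assms] by (elim exE)
  have c: "card {..<?f} = ?f" by (rule card_lessThan)
  show "\<exists>S R. is_PDA S 5 K 3 R \<and> card S = ?f"
    by (rule exI[of _ "{..<?f}"], rule exI[of _ R], rule conjI[OF R c])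
next
  fix y assume "\<exists>S R. is_PDA S 5 K 3 R \<and> card S = y"
  then obtain S R where SR: "is_PDA S 5 K 3 R" "card S = y" by (elim exE conjE)
  have "(if K mod 10 = 0 \<or> K mod 10 = 9 then (K + 1) div 2 else (K + 1) div 2 + 1) \<le> card S"
    by (rule lower_bound[OF SR(1)])
  then show "(if K mod 10 = 0 \<or> K mod 10 = 9 then (K + 1) div 2 else (K + 1) div 2 + 1) \<le> y"
    unfolding SR(2) .
qed


end
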